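(* Fix $\vartheta_1\in(0,\pi/2)$ and an integer $k\ge0$. Let $\eta_k$ be the unique solution of $\tan\eta=\eta$ in $k\pi\le\eta<k\pi+\pi/2$, and set $\eta_k'=\eta_k-k\pi$. (1) If $\vartheta_1<\eta_k'$, then on $I_k$ the function $\Phi$ decreases from $\Phi(\vartheta_1+k\pi)=k\pi$ to $\Phi(\eta_k)\ge0$ and then increases to $\Phi((k+1)\pi-\vartheta_1)=(k+1)\pi$. (2) If $\vartheta_1\ge\eta_k'$, then $\Phi$ increases on $I_k$ from $\Phi(\vartheta_1+k\pi)=k\pi$ to $\Phi((k+1)\pi-\vartheta_1)=(k+1)\pi$.
   Context: For integers $k\ge0$ let $I_k=[\vartheta_1+k\pi,(k+1)\pi-\vartheta_1]$. For $\eta\in I_k$ set $\gamma(\eta)=\sqrt{1-\sin^2\vartheta_1/\sin^2\eta}$ and $$\Phi(\eta)=-\eta\,\gamma(\eta)+k\pi+\arccos\Big(\frac{\cos(\eta-k\pi)}{\cos\vartheta_1}\Big),\qquad\arccos\in[0,\pi].$$ *)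

theory Defs
  imports Complex_Main
begin

definition gam :: "real \<Rightarrow> real \<Rightarrow> real" where
  "gam \<theta>1 \<eta> = sqrt (1 - (sin \<theta>1)^2 / (sin \<eta>)^2)"

definition Phi :: "real \<Rightarrow> nat \<Rightarrow> real \<Rightarrow> real" where
  "Phi \<theta>1 k \<eta> = - \<eta> * gam \<theta>1 \<eta> + real k * pi
      + arccos (cos (\<eta> - real k * pi) / cos \<theta>1)"

definition eta :: "nat \<Rightarrow> real" where
  "eta k = (THE x. real k * pi \<le> x \<and> x < real k * pi + pi / 2 \<and> tan x = x)"

end

theory Submission
  imports Defs
begin

definition PP :: "real \<Rightarrow> real \<Rightarrow> real \<Rightarrow> real" where
  "PP th K t = -(t+K) * sqrt (1 - (sin th)^2/(sin t)^2) + K + arccos (cos t / cos th)"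

definition ff :: "real \<Rightarrow> real \<Rightarrow> real" where
  "ff K t = sin t - (t+K) * cos t"

lemma sin_shift: "sin (t + real k * pi) = (-1)^k * sin t"
  by (simp add: sin_add)
lemma cos_shift: "cos (t + real k * pi) = (-1)^k * cos t"
  by (simp add: cos_add)
lemma sq_shift: "(sin (t + real k * pi))^2 = (sin t)^2"
  by (simp add: sin_shift power_mult_distrib flip: power_mult)

lemma Phi_shift: "Phi th k (t + real k * pi) = PP th (real k * pi) t"
  unfolding Phi_def gam_def PP_def by (simp add: sq_shift)

lemma ff_deriv: "(ff K has_real_derivative (t+K) * sin t) (at t)"
  unfolding ff_def
  by (rule derivative_eq_intros refl | simp add: algebra_simps)+

lemma ff_strict_mono:
  assumes "K \<ge> 0" "0 \<le> a" "a < b" "b \<le> pi"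
  shows "ff K a < ff K b"
proof (rule DERIV_pos_imp_increasing_open[OF assms(3)])
  fix x assume "a < x" "x < b"
  then have "0 < x" "x < pi" using assms by auto
  then have "(x+K) * sin x > 0" using assms sin_gt_zero by auto
  then show "\<exists>y. DERIV (ff K) x :> y \<and> 0 < y" using ff_deriv by blast
next
  show "continuous_on {a..b} (ff K)" unfolding ff_def by (intro continuous_intros)
qed


lemma zero_iff:
  assumes "0 \<le> t" "t < pi/2"
  shows "tan (t + real k * pi) = t + real k * pi \<longleftrightarrow> ff (real k * pi) t = 0"
proof -
  have c: "cos t > 0" using assms by (intro cos_gt_zero_pi) auto
  have "tan (t + real k * pi) = tan t" by simp
  also have "\<dots> = sin t / cos t" by (simp add: tan_def)
  finally have T: "tan (t + real k * pi) = sin t / cos t" .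
  show ?thesis unfolding ff_def T using c by (auto simp: divide_eq_eq)
qed

lemma eta_ex1: "\<exists>!x. real k * pi \<le> x \<and> x < real k * pi + pi / 2 \<and> tan x = x"
proof -
  define K where "K = real k * pi"
  have K0: "K \<ge> 0" unfolding K_def by simp
  obtain t where t: "0 \<le> t" "t < pi/2" "ff K t = 0"
  proof (cases "k = 0")
    case True
    then show ?thesis using that[of 0] unfolding K_def ff_def by simp
  next
    case False
    have "ff K 0 \<le> 0" using K0 unfolding ff_def by simp
    moreover have "0 \<le> ff K (pi/2)" unfolding ff_def by simp
    moreover have "\<forall>x. 0 \<le> x \<and> x \<le> pi/2 \<longrightarrow> isCont (ff K) x"
      unfolding ff_def by (intro allI impI continuous_intros)
    ultimately obtain x where x: "0 \<le> x" "x \<le> pi/2" "ff K x = 0"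
      using IVT[of "ff K" 0 0 "pi/2"] by auto
    moreover have "x \<noteq> pi/2"
    proof
      assume a: "x = pi/2" have "ff K x = 1" unfolding a by (simp add: ff_def)
      then show False using x by simp
    qed
    ultimately show ?thesis using that[of x] by auto
  qed
  show ?thesis
  proof (rule ex1I[of _ "t + K"])
    show "real k * pi \<le> t + K \<and> t + K < real k * pi + pi / 2 \<and> tan (t + K) = t + K"
      using t zero_iff[of t k] unfolding K_def by auto
  next
    fix x assume x: "real k * pi \<le> x \<and> x < real k * pi + pi / 2 \<and> tan x = x"
    define u where "u = x - K"
    have u: "0 \<le> u" "u < pi/2" "x = u + K" using x unfolding u_def K_def by auto
    have "ff K u = 0" using zero_iff[of u k] u x unfolding K_def by auto
    have "u = t"
    proof (rule ccontr)
      assume "u \<noteq> t"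
      then have "u < t \<or> t < u" by auto
      then show False using ff_strict_mono[OF K0, of u t] ff_strict_mono[OF K0, of t u] u t \<open>ff K u = 0\<close>
        by auto
    qed
    then show "x = t + K" using u by simp
  qed
qed

lemma eta_props:
  shows "real k * pi \<le> eta k" "eta k < real k * pi + pi/2" "ff (real k * pi) (eta k - real k * pi) = 0"
proof -
  have e: "real k * pi \<le> eta k \<and> eta k < real k * pi + pi / 2 \<and> tan (eta k) = eta k"
    unfolding eta_def by (rule theI'[OF eta_ex1])
  then show "real k * pi \<le> eta k" "eta k < real k * pi + pi/2" by auto
  show "ff (real k * pi) (eta k - real k * pi) = 0"
    using zero_iff[of "eta k - real k * pi" k] e by auto
qed



lemma PP_deriv_raw:
  assumes g: "0 < 1 - (sin th)^2/(sin t)^2" and S: "sin t \<noteq> 0"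
    and h: "-1 < cos t / cos th" "cos t / cos th < 1"
  shows "(PP th K has_real_derivative
     (-1 * sqrt (1 - (sin th)^2/(sin t)^2) + (inverse (sqrt (1 - (sin th)^2/(sin t)^2)) / 2 * ((sin th)^2 * (2 * sin t * cos t) / ((sin t)^2)^2)) * (-(t+K))
      + 0 + inverse (- sqrt (1 - (cos t / cos th)^2)) * (- sin t / cos th))) (at t)"
proof -
  have dg: "((\<lambda>t. 1 - (sin th)^2/(sin t)^2) has_real_derivative ((sin th)^2 * (2 * sin t * cos t) / ((sin t)^2)^2)) (at t)"
    by (rule derivative_eq_intros refl | use S in \<open>simp add: field_simps power2_eq_square\<close>)+
  have ds: "((\<lambda>t. sqrt (1 - (sin th)^2/(sin t)^2)) has_real_derivative
      inverse (sqrt (1 - (sin th)^2/(sin t)^2)) / 2 * ((sin th)^2 * (2 * sin t * cos t) / ((sin t)^2)^2)) (at t)"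
    by (rule DERIV_chain2[OF DERIV_real_sqrt[OF g] dg])
  have dh: "((\<lambda>t. cos t / cos th) has_real_derivative (- sin t / cos th)) (at t)"
    using DERIV_cdivide[OF DERIV_cos] by simp
  have da: "((\<lambda>t. arccos (cos t / cos th)) has_real_derivative
      inverse (- sqrt (1 - (cos t / cos th)^2)) * (- sin t / cos th)) (at t)"
    by (rule DERIV_chain2[OF DERIV_arccos[OF h] dh])
  have dl: "((\<lambda>t. -(t+K)) has_real_derivative -1) (at t)"
    by (rule derivative_eq_intros refl | simp)+
  have PPe: "PP th K = (\<lambda>t. -(t+K) * sqrt (1 - (sin th)^2/(sin t)^2) + K + arccos (cos t / cos th))"
    by (rule ext) (simp add: PP_def)
  show ?thesis unfolding PPe
    by (rule DERIV_add[OF DERIV_add[OF DERIV_mult[OF dl ds] DERIV_const[of K]] da])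
qed

lemma bounds:
  assumes "0 < th" "th < pi/2" "th \<le> t" "t \<le> pi - th"
  shows "\<bar>cos t\<bar> \<le> cos th" "sin th \<le> sin t" "0 < sin t"
    and "th < t \<Longrightarrow> t < pi - th \<Longrightarrow> \<bar>cos t\<bar> < cos th"
    and "th < t \<Longrightarrow> t < pi - th \<Longrightarrow> sin th < sin t"
proof -
  have p: "0 < pi" by (rule pi_gt_zero)
  have r: "0 \<le> t" "t \<le> pi" "0 \<le> th" "th \<le> pi" "0 \<le> pi - th" "pi - th \<le> pi"
    using assms p by linarith+
  have c0: "cos th > 0" using assms by (intro cos_gt_zero_pi) auto
  have cpm: "cos (pi - th) = - cos th" by simp
  have a: "cos t \<le> cos th" using cos_mono_le_eq[OF r(1,2,3,4)] assms(3) by simp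
  have b: "cos (pi - th) \<le> cos t" using cos_mono_le_eq[OF r(5,6,1,2)] assms(4) by simp
  show ab: "\<bar>cos t\<bar> \<le> cos th" using a b unfolding cpm by linarith
  have "0 < t" "t < pi" using assms p by linarith+
  then show st0: "0 < sin t" by (rule sin_gt_zero)
  have st: "(sin t)^2 = 1 - (cos t)^2" "(sin th)^2 = 1 - (cos th)^2"
    by (simp_all add: sin_squared_eq)
  have "\<bar>cos t\<bar> \<le> \<bar>cos th\<bar>" using ab c0 by linarith
  then have "(cos t)^2 \<le> (cos th)^2" by (simp only: abs_le_square_iff)
  then have "(sin th)^2 \<le> (sin t)^2" unfolding st by linarith
  then show "sin th \<le> sin t" by (rule power2_le_imp_le) (use st0 in simp)
  {
  assume h: "th < t" "t < pi - th"
  have a: "cos t < cos th" using cos_mono_less_eq[OF r(1,2,3,4)] h(1) by simp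
  have b: "cos (pi - th) < cos t" using cos_mono_less_eq[OF r(5,6,1,2)] h(2) by simp
  show ab: "\<bar>cos t\<bar> < cos th" using a b unfolding cpm by linarith
  have "\<not> \<bar>cos th\<bar> \<le> \<bar>cos t\<bar>" using ab c0 by linarith
  then have "\<not> (cos th)^2 \<le> (cos t)^2" by (metis abs_le_square_iff)
  then have "(sin th)^2 < (sin t)^2" unfolding st by linarith
  then show "sin th < sin t" by (rule power2_less_imp_less) (use st0 in simp)
  }
qed

lemma PP_deriv_sign:
  assumes "0 < th" "th < pi/2" "th < t" "t < pi - th"
  shows "\<exists>D. (PP th K has_real_derivative D) (at t) \<and> (0 < D \<longleftrightarrow> 0 < ff K t) \<and> (D < 0 \<longleftrightarrow> ff K t < 0)"
proof -
  define s S C c where "s = sin th" "S = sin t" "C = cos t" "c = cos th"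
  have s0: "0 < s" unfolding s_S_C_c_def using assms by (intro sin_gt_zero) auto
  have c0: "0 < c" unfolding s_S_C_c_def using assms by (intro cos_gt_zero_pi) auto
  have sS: "s < S" and Cc: "\<bar>C\<bar> < c" and S0: "0 < S"
    using bounds[OF assms(1,2), of t] assms unfolding s_S_C_c_def by auto
  have id: "S^2 - s^2 = c^2 - C^2" unfolding s_S_C_c_def by (simp add: sin_squared_eq)
  define R where "R = sqrt (S^2 - s^2)"
  have R2: "R^2 = S^2 - s^2" unfolding R_def using sS s0 by (simp add: power_strict_mono less_imp_le)
  have R0: "0 < R" unfolding R_def using sS s0 by (simp add: power_strict_mono)
  have g1: "sqrt (1 - s^2/S^2) = R / S"
  proof -
    have "1 - s^2/S^2 = (S^2 - s^2) / S^2" using S0 by (simp add: field_simps)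
    then show ?thesis unfolding R_def using S0 by (simp add: real_sqrt_divide)
  qed
  have g2: "sqrt (1 - (C/c)^2) = R / c"
  proof -
    have "1 - (C/c)^2 = (S^2 - s^2) / c^2" using c0 id by (simp add: field_simps)
    then show ?thesis unfolding R_def using c0 by (simp add: real_sqrt_divide)
  qed
  have gpos: "0 < 1 - (sin th)^2/(sin t)^2" using g1 R0 S0
    by (metis real_sqrt_gt_0_iff divide_pos_pos s_S_C_c_def(1,2) real_sqrt_le_0_iff not_less)
  have hb: "-1 < cos t / cos th" "cos t / cos th < 1" using Cc c0 unfolding s_S_C_c_def
    by (auto simp: field_simps abs_less_iff)
  note d = PP_deriv_raw[OF gpos _ hb, of K]
  define D where "D = -1 * sqrt (1 - (sin th)^2/(sin t)^2) + (inverse (sqrt (1 - (sin th)^2/(sin t)^2)) / 2 * ((sin th)^2 * (2 * sin t * cos t) / ((sin t)^2)^2)) * (-(t+K))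
      + 0 + inverse (- sqrt (1 - (cos t / cos th)^2)) * (- sin t / cos th)"
  have DD: "D = -R/S + inverse (R/S) / 2 * (s^2 * (2*S*C) / (S^2)^2) * (-(t+K)) + inverse (-(R/c)) * (-S/c)"
    unfolding D_def g1[unfolded s_S_C_c_def] g2[unfolded s_S_C_c_def]
    unfolding s_S_C_c_def by simp
  have Deq: "D = s^2 * ff K t / (S^2 * R)"
  proof -
    have T2: "inverse (R/S) / 2 * (s^2 * (2*S*C) / (S^2)^2) * (-(t+K)) = -((t+K) * s^2 * C / (S^2 * R))"
      using S0 R0 by (simp add: field_simps power2_eq_square)
    have T3: "inverse (-(R/c)) * (-S/c) = S / R" using c0 R0 by (simp add: field_simps)
    have T13: "-R/S + S/R = s^2 * S / (S^2 * R)"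
    proof -
      have "-R/S + S/R = (S^2 - R^2) / (S * R)" using S0 R0 by (simp add: field_simps power2_eq_square)
      also have "\<dots> = s^2 / (S*R)" using R2 by simp
      also have "\<dots> = s^2 * S / (S^2 * R)" using S0 by (simp add: power2_eq_square)
      finally show ?thesis .
    qed
    have "D = (-R/S + S/R) - ((t+K) * s^2 * C / (S^2 * R))" unfolding DD T2 T3 by simp
    also have "\<dots> = s^2 * (S - (t+K)*C) / (S^2 * R)" unfolding T13 by (simp add: diff_divide_distrib algebra_simps)
    finally show ?thesis unfolding ff_def s_S_C_c_def .
  qed
  define q where "q = s^2 / (S^2 * R)"
  have q0: "0 < q" using s0 S0 R0 unfolding q_def by simp
  have D': "D = ff K t * q" unfolding Deq q_def by simp
  have sg1: "0 < D \<longleftrightarrow> 0 < ff K t"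
    unfolding D' using q0 by (simp add: zero_less_mult_iff)
  have sg2: "D < 0 \<longleftrightarrow> ff K t < 0"
    unfolding D' using q0 by (simp add: mult_less_0_iff)
  have sn: "sin t \<noteq> 0" using S0 s_S_C_c_def by simp
  have dd: "(PP th K has_real_derivative D) (at t)" unfolding D_def by (rule d[OF sn])
  show ?thesis by (rule exI[of _ D], intro conjI dd sg1 sg2)
qed

lemma PP_cont:
  assumes "0 < th" "th < pi/2"
  shows "continuous_on {th..pi-th} (PP th K)"
proof -
  have PPe: "PP th K = (\<lambda>t. -(t+K) * sqrt (1 - (sin th)^2/(sin t)^2) + K + arccos (cos t / cos th))"
    by (rule ext) (simp add: PP_def)
  have c0: "cos th > 0" using assms by (intro cos_gt_zero_pi) auto
  have b: "\<And>t. t \<in> {th..pi-th} \<Longrightarrow> sin t \<noteq> 0 \<and> -1 \<le> cos t / cos th \<and> cos t / cos th \<le> 1"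
  proof -
    fix t assume "t \<in> {th..pi-th}"
    then have "\<bar>cos t\<bar> \<le> cos th" "0 < sin t" using bounds[OF assms, of t] by auto
    then show "sin t \<noteq> 0 \<and> -1 \<le> cos t / cos th \<and> cos t / cos th \<le> 1"
      using c0 by (auto simp: field_simps abs_le_iff)
  qed
  show ?thesis unfolding PPe
    by (intro continuous_intros continuous_on_arccos) (use b c0 in auto)
qed

lemma PP_left: assumes "0 < th" "th < pi/2" shows "PP th K th = K"
proof -
  have "sin th \<noteq> 0" "cos th \<noteq> 0" using assms sin_gt_zero[of th] cos_gt_zero_pi[of th] by auto
  then show ?thesis unfolding PP_def by simp
qed

lemma PP_right: assumes "0 < th" "th < pi/2" shows "PP th K (pi - th) = K + pi"
proof -
  have "sin th \<noteq> 0" "cos th \<noteq> 0" using assms sin_gt_zero[of th] cos_gt_zero_pi[of th] by auto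
  then show ?thesis unfolding PP_def by simp
qed

lemma PP_incr:
  assumes "0 < th" "th < pi/2" "K \<ge> 0" "ff K t0 = 0" "0 \<le> t0"
    and "t0 \<le> a" "th \<le> a" "a < b" "b \<le> pi - th"
  shows "PP th K a < PP th K b"
proof (rule DERIV_pos_imp_increasing_open[OF assms(8)])
  fix x assume x: "a < x" "x < b"
  then have "0 < ff K x" using ff_strict_mono[OF assms(3,5), of x] assms by auto
  then show "\<exists>y. DERIV (PP th K) x :> y \<and> 0 < y"
    using PP_deriv_sign[OF assms(1,2), of x K] x assms by auto
next
  show "continuous_on {a..b} (PP th K)"
    by (rule continuous_on_subset[OF PP_cont[OF assms(1,2)]]) (use assms in auto)
qed

lemma PP_decr:
  assumes "0 < th" "th < pi/2" "K \<ge> 0" "ff K t0 = 0" "t0 < pi/2"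
    and "b \<le> t0" "th \<le> a" "a < b"
  shows "PP th K b < PP th K a"
proof (rule DERIV_neg_imp_decreasing_open[OF assms(8)])
  fix x assume x: "a < x" "x < b"
  then have "ff K x < 0" using ff_strict_mono[OF assms(3), of x t0] assms by auto
  then show "\<exists>y. DERIV (PP th K) x :> y \<and> y < 0"
    using PP_deriv_sign[OF assms(1,2), of x K] x assms by auto
next
  show "continuous_on {a..b} (PP th K)"
    by (rule continuous_on_subset[OF PP_cont[OF assms(1,2)]]) (use assms in auto)
qed

lemma tan_minus_mono:
  assumes "0 \<le> a" "a < b" "b < pi/2"
  shows "tan a - a < tan b - b"
proof (rule DERIV_pos_imp_increasing_open[OF assms(2)])
  fix x assume x: "a < x" "x < b"
  have c: "0 < cos x" using x assms by (intro cos_gt_zero_pi) auto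
  have c1: "cos x < 1" using x assms cos_mono_less_eq[of x 0] by auto
  have "(cos x)^2 < 1" using c c1 by (simp add: power_less_one_iff abs_square_less_1)
  then have "inverse ((cos x)^2) - 1 > 0" using c by (simp add: field_simps)
  moreover have "DERIV (\<lambda>x. tan x - x) x :> inverse ((cos x)^2) - 1"
    using c by (intro derivative_intros DERIV_tan) auto
  ultimately show "\<exists>y. DERIV (\<lambda>x. tan x - x) x :> y \<and> 0 < y" by blast
next
  have "\<forall>x\<in>{a..b}. cos x \<noteq> 0"
  proof
    fix x assume "x \<in> {a..b}"
    then have "0 < cos x" using assms by (intro cos_gt_zero_pi) auto
    then show "cos x \<noteq> 0" by simp
  qed
  then show "continuous_on {a..b} (\<lambda>x. tan x - x)" by (intro continuous_intros) auto
qed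

lemma PP_eta_nonneg:
  assumes "0 < th" "th < pi/2" "K \<ge> 0" "ff K t0 = 0" "th < t0" "t0 < pi/2"
  shows "0 \<le> PP th K t0"
proof -
  define s S C c where "s = sin th" "S = sin t0" "C = cos t0" "c = cos th"
  have s0: "0 < s" unfolding s_S_C_c_def using assms by (intro sin_gt_zero) auto
  have c0: "0 < c" unfolding s_S_C_c_def using assms by (intro cos_gt_zero_pi) auto
  have C0: "0 < C" unfolding s_S_C_c_def using assms by (intro cos_gt_zero_pi) auto
  have sS: "s < S" and Cc: "\<bar>C\<bar> < c" and S0: "0 < S"
    using bounds[OF assms(1,2), of t0] assms unfolding s_S_C_c_def by auto
  have c1: "c < 1" unfolding s_S_C_c_def using assms cos_mono_less_eq[of th 0] by auto
  have id: "S^2 - s^2 = c^2 - C^2" unfolding s_S_C_c_def by (simp add: sin_squared_eq)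
  define R where "R = sqrt (S^2 - s^2)"
  have g1: "sqrt (1 - s^2/S^2) = R / S"
  proof -
    have "1 - s^2/S^2 = (S^2 - s^2) / S^2" using S0 by (simp add: field_simps)
    then show ?thesis unfolding R_def using S0 by (simp add: real_sqrt_divide)
  qed
  have g2: "sqrt (1 - (C/c)^2) = R / c"
  proof -
    have "1 - (C/c)^2 = (S^2 - s^2) / c^2" using c0 id by (simp add: field_simps)
    then show ?thesis unfolding R_def using c0 by (simp add: real_sqrt_divide)
  qed
  have tK: "t0 + K = S / C" using assms(4) C0 unfolding ff_def s_S_C_c_def by (simp add: field_simps)
  define u where "u = C / c"
  have u: "0 < u" "u < 1" "C < u" unfolding u_def using C0 c0 Cc c1
    by (auto simp: field_simps mult_less_cancel_left_pos)
  define al where "al = arccos u"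
  have cal: "cos al = u" unfolding al_def using u by simp
  have sal: "sin al = R / c" unfolding al_def using u g2 unfolding u_def by (simp add: sin_arccos)
  have al0: "0 \<le> al" "al \<le> pi" unfolding al_def using u by (auto intro: arccos_lbound arccos_ubound)
  have alt: "al < t0" using cos_mono_less_eq[of t0 al] al0 assms cal u unfolding s_S_C_c_def by auto
  have tal: "tan al = R / C" unfolding tan_def sal cal u_def using c0 C0 by (simp add: field_simps)
  have tt0: "tan t0 = t0 + K" unfolding tan_def tK s_S_C_c_def ..
  have "tan al - al \<le> tan t0 - t0"
  proof (cases "al < t0")
    case True then show ?thesis using tan_minus_mono[of al t0] al0 assms by auto
  qed (use alt in auto)
  then have key: "R / C - al \<le> K" using tal tt0 by simp
  have "PP th K t0 = -(t0+K) * (R/S) + K + al"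
    unfolding PP_def al_def u_def using g1 unfolding s_S_C_c_def by simp
  also have "\<dots> = K + al - R / C" unfolding tK using S0 C0 by (simp add: field_simps)
  finally show ?thesis using key by simp
qed

theorem lemma5p14:
  fixes \<theta>1 :: real and k :: nat
  assumes "0 < \<theta>1" and "\<theta>1 < pi / 2"
  shows "Phi \<theta>1 k (\<theta>1 + real k * pi) = real k * pi
    \<and> Phi \<theta>1 k ((real k + 1) * pi - \<theta>1) = (real k + 1) * pi
    \<and> (\<theta>1 < eta k - real k * pi \<longrightarrow>
          (\<forall>x\<in>{\<theta>1 + real k * pi .. eta k}. \<forall>y\<in>{\<theta>1 + real k * pi .. eta k}.
              x < y \<longrightarrow> Phi \<theta>1 k y < Phi \<theta>1 k x)
        \<and> (\<forall>x\<in>{eta k .. (real k + 1) * pi - \<theta>1}. \<forall>y\<in>{eta k .. (real k + 1) * pi - \<theta>1}.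
              x < y \<longrightarrow> Phi \<theta>1 k x < Phi \<theta>1 k y)
        \<and> 0 \<le> Phi \<theta>1 k (eta k))
    \<and> (eta k - real k * pi \<le> \<theta>1 \<longrightarrow>
          (\<forall>x\<in>{\<theta>1 + real k * pi .. (real k + 1) * pi - \<theta>1}.
           \<forall>y\<in>{\<theta>1 + real k * pi .. (real k + 1) * pi - \<theta>1}.
              x < y \<longrightarrow> Phi \<theta>1 k x < Phi \<theta>1 k y))"
proof -
  define K where "K = real k * pi"
  define t0 where "t0 = eta k - K"
  have K0: "K \<ge> 0" unfolding K_def by simp
  have t0: "0 \<le> t0" "t0 < pi/2" "ff K t0 = 0"
    using eta_props[of k] unfolding t0_def K_def by auto
  have sh: "Phi \<theta>1 k x = PP \<theta>1 K (x - K)" for x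
    using Phi_shift[of \<theta>1 k "x - K"] unfolding K_def by simp
  have e1: "Phi \<theta>1 k (\<theta>1 + real k * pi) = real k * pi"
    using PP_left[OF assms, of K] unfolding sh K_def by simp
  have r: "(real k + 1) * pi - \<theta>1 - K = pi - \<theta>1" unfolding K_def by (simp add: distrib_right)
  have e2: "Phi \<theta>1 k ((real k + 1) * pi - \<theta>1) = (real k + 1) * pi"
    unfolding sh r PP_right[OF assms] unfolding K_def by (simp add: distrib_right)
  have c1: "\<theta>1 < eta k - real k * pi \<longrightarrow>
          (\<forall>x\<in>{\<theta>1 + real k * pi .. eta k}. \<forall>y\<in>{\<theta>1 + real k * pi .. eta k}.
              x < y \<longrightarrow> Phi \<theta>1 k y < Phi \<theta>1 k x)
        \<and> (\<forall>x\<in>{eta k .. (real k + 1) * pi - \<theta>1}. \<forall>y\<in>{eta k .. (real k + 1) * pi - \<theta>1}.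
              x < y \<longrightarrow> Phi \<theta>1 k x < Phi \<theta>1 k y)
        \<and> 0 \<le> Phi \<theta>1 k (eta k)"
  proof (intro impI conjI ballI)
    assume a: "\<theta>1 < eta k - real k * pi"
    fix x y assume xy: "x \<in> {\<theta>1 + real k * pi .. eta k}" "y \<in> {\<theta>1 + real k * pi .. eta k}" "x < y"
    have "y - K \<le> t0" "\<theta>1 \<le> x - K" "x - K < y - K"
      using xy unfolding t0_def K_def[symmetric] by auto
    then show "Phi \<theta>1 k y < Phi \<theta>1 k x"
      unfolding sh by (rule PP_decr[OF assms K0 t0(3) t0(2)])
  next
    assume a: "\<theta>1 < eta k - real k * pi"
    then have a': "\<theta>1 < t0" unfolding t0_def K_def .
    fix x y assume xy: "x \<in> {eta k .. (real k + 1) * pi - \<theta>1}" "y \<in> {eta k .. (real k + 1) * pi - \<theta>1}" "x < y"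
    have "t0 \<le> x - K" "\<theta>1 \<le> x - K" "x - K < y - K" "y - K \<le> pi - \<theta>1"
      using xy a' r unfolding t0_def by auto
    then show "Phi \<theta>1 k x < Phi \<theta>1 k y"
      unfolding sh by (rule PP_incr[OF assms K0 t0(3) t0(1)])
  next
    assume a: "\<theta>1 < eta k - real k * pi"
    then have a': "\<theta>1 < t0" unfolding t0_def K_def .
    show "0 \<le> Phi \<theta>1 k (eta k)"
      unfolding sh using PP_eta_nonneg[OF assms K0 t0(3) a' t0(2)] unfolding t0_def .
  qed
  have c2: "eta k - real k * pi \<le> \<theta>1 \<longrightarrow>
          (\<forall>x\<in>{\<theta>1 + real k * pi .. (real k + 1) * pi - \<theta>1}.
           \<forall>y\<in>{\<theta>1 + real k * pi .. (real k + 1) * pi - \<theta>1}.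
              x < y \<longrightarrow> Phi \<theta>1 k x < Phi \<theta>1 k y)"
  proof (intro impI ballI)
    assume a: "eta k - real k * pi \<le> \<theta>1"
    then have a': "t0 \<le> \<theta>1" unfolding t0_def K_def .
    fix x y assume xy: "x \<in> {\<theta>1 + real k * pi .. (real k + 1) * pi - \<theta>1}"
      "y \<in> {\<theta>1 + real k * pi .. (real k + 1) * pi - \<theta>1}" "x < y"
    have "t0 \<le> x - K" "\<theta>1 \<le> x - K" "x - K < y - K" "y - K \<le> pi - \<theta>1"
      using xy a' r unfolding K_def[symmetric] by auto
    then show "Phi \<theta>1 k x < Phi \<theta>1 k y"
      unfolding sh by (rule PP_incr[OF assms K0 t0(3) t0(1)])
  qed
  show ?thesis by (intro conjI e1 e2 c1 c2)
qed

end
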